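(* Let $\Sigma$ be a finite alphabet with $|\Sigma|\ge 2$, let $m,n$ be positive integers with $m\ge 2$, and let $\rho,\rho_1,\rho_2,\rho_3$ be real numbers with $0<\rho<1$, $\rho_1>0$, $\rho_2>0$, $\rho_3>0$ and $\rho_1+\rho_2+\rho_3\le 1$. Then the Markov chains with transition matrices $S^{\mathfrak{N}(n)}_{\rho_1,\rho_2,\rho_3}$, $S^{\mathfrak{N}_m(n)}_{\rho_1,\rho_2,\rho_3}$ and $S^{\mathfrak{N}'_m(n)}_{\rho_1,\rho_2,\rho_3}$ are irreducible, and so are the Markov chains with transition matrices $S^{\mathfrak{N}(n)^\bullet}_{\rho}$, $S^{\mathfrak{N}_m(n)^\bullet}_{\rho}$ and $S^{\mathfrak{N}'_m(n)^\bullet}_{\rho}$.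
   Context: A non-deterministic automaton (NFA) over $\Sigma$ is a tuple $(Q,\Sigma,\Delta,I,F)$ with $Q$ a finite set of states, $\Delta\subseteq Q\times\Sigma\times Q$ the transitions, $I\subseteq Q$ the initial states and $F\subseteq Q$ the final states. A path is a sequence of transitions $(p_0,a_0,q_0)\cdots(p_k,a_k,q_k)$ with $q_i=p_{i+1}$. The NFA is accessible if every state is reachable by a path from an initial state, co-accessible if from every state a final state is reachable by a path, and trim if both. $\mathfrak{N}(n)$ is the set of trim NFAs over $\Sigma$ with state set $Q=\{1,\dots,n\}$. $\mathfrak{N}_m(n)$ is the set of automata in $\mathfrak{N}(n)$ such that for each state $p$ there are at most $m$ pairs $(a,q)$ with $(p,a,q)\in\Delta$. $\mathfrak{N}'_m(n)$ is the set of automata in $\mathfrak{N}(n)$ such that for each state $p$ and each letter $a$ there are at most $m$ states $q$ with $(p,a,q)\in\Delta$. For a class $\mathfrak{X}$, $\mathfrak{X}^\bullet$ is the subclass of automata whose set of initial states is exactly $\{1\}$. For an automaton $\mathcal{A}=(Q,\Sigma,\Delta,I,F)$: $\mathsf{Ch_{init}}(\mathcal{A},q)$ is $\mathcal{A}$ with $q$ removed from $I$ if $q\in I$ and added to $I$ otherwise; $\mathsf{Ch_{final}}(\mathcal{A},q)$ is defined similarly with $F$; $\mathsf{Ch_{trans}}(\mathcal{A},(p,a,q))$ is $\mathcal{A}$ with $(p,a,q)$ removed from $\Delta$ if present and added otherwise. For a class $\mathfrak{X}$ of automata with state set $Q=\{1,\dots,n\}$ and reals $\rho_i\in[0,1]$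 with $\rho_1+\rho_2+\rho_3\le1$, the matrix $S^{\mathfrak{X}}_{\rho_1,\rho_2,\rho_3}$ on $\mathfrak{X}\times\mathfrak{X}$ is: for $x\ne y$, $S(x,y)=\rho_1/n$ if $y=\mathsf{Ch_{init}}(x,q)$ for some $q$; $S(x,y)=\rho_2/n$ if $y=\mathsf{Ch_{final}}(x,q)$ for some $q$; $S(x,y)=\rho_3/(|\Sigma|n^2)$ if $y=\mathsf{Ch_{trans}}(x,(p,a,q))$ for some $(p,a,q)\in Q\times\Sigma\times Q$; $S(x,y)=0$ otherwise; and $S(x,x)=1-\sum_{y\ne x}S(x,y)$. For $\mathfrak{X}\in\{\mathfrak{N}(n),\mathfrak{N}_m(n),\mathfrak{N}'_m(n)\}$ and $0<\rho<1$, $S^{\mathfrak{X}^\bullet}_\rho$ is the matrix $S^{\mathfrak{X}^\bullet}_{0,\rho,1-\rho}$ defined by the same rules on the class $\mathfrak{X}^\bullet$. A Markov chain is irreducible if the directed graph on its state space with an edge $x\to y$ whenever the transition probability from $x$ to $y$ is nonzero is strongly connected. *)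

theory Defs
  imports Complex_Main
begin

text \<open>NFAs over the alphabet given by the finite type 'a; states are natural numbers,
  the state set being {1..n}.\<close>

record 'a nfa =
  trans :: "(nat \<times> 'a \<times> nat) set"
  init  :: "nat set"
  final :: "nat set"

definition edge_rel :: "'a nfa \<Rightarrow> (nat \<times> nat) set" where
  "edge_rel A = {(p, q). \<exists>a. (p, a, q) \<in> trans A}"

definition accessible :: "nat \<Rightarrow> 'a nfa \<Rightarrow> bool" where
  "accessible n A \<longleftrightarrow> (\<forall>q\<in>{1..n}. \<exists>i\<in>init A. (i, q) \<in> (edge_rel A)\<^sup>*)"

definition coaccessible :: "nat \<Rightarrow> 'a nfa \<Rightarrow> bool" where
  "coaccessible n A \<longleftrightarrow> (\<forall>q\<in>{1..n}. \<exists>f\<in>final A. (q, f) \<in> (edge_rel A)\<^sup>*)"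

definition trim :: "nat \<Rightarrow> 'a nfa \<Rightarrow> bool" where
  "trim n A \<longleftrightarrow> accessible n A \<and> coaccessible n A"

definition wf_nfa :: "nat \<Rightarrow> 'a nfa \<Rightarrow> bool" where
  "wf_nfa n A \<longleftrightarrow> trans A \<subseteq> {1..n} \<times> UNIV \<times> {1..n} \<and> init A \<subseteq> {1..n} \<and> final A \<subseteq> {1..n}"

definition NFA_class :: "nat \<Rightarrow> 'a nfa set" where
  "NFA_class n = {A. wf_nfa n A \<and> trim n A}"

definition NFA_class_m :: "nat \<Rightarrow> nat \<Rightarrow> 'a nfa set" where
  "NFA_class_m m n = {A \<in> NFA_class n. \<forall>p\<in>{1..n}. card {(a, q). (p, a, q) \<in> trans A} \<le> m}"

definition NFA_class_m' :: "nat \<Rightarrow> nat \<Rightarrow> 'a nfa set" where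
  "NFA_class_m' m n = {A \<in> NFA_class n. \<forall>p\<in>{1..n}. \<forall>a. card {q. (p, a, q) \<in> trans A} \<le> m}"

definition bullet :: "'a nfa set \<Rightarrow> 'a nfa set" where
  "bullet X = {A \<in> X. init A = {1}}"

definition toggle :: "'b \<Rightarrow> 'b set \<Rightarrow> 'b set" where
  "toggle x S = (if x \<in> S then S - {x} else insert x S)"

definition Ch_init :: "'a nfa \<Rightarrow> nat \<Rightarrow> 'a nfa" where
  "Ch_init A q = A\<lparr>init := toggle q (init A)\<rparr>"

definition Ch_final :: "'a nfa \<Rightarrow> nat \<Rightarrow> 'a nfa" where
  "Ch_final A q = A\<lparr>final := toggle q (final A)\<rparr>"

definition Ch_trans :: "'a nfa \<Rightarrow> nat \<times> 'a \<times> nat \<Rightarrow> 'a nfa" where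
  "Ch_trans A t = A\<lparr>trans := toggle t (trans A)\<rparr>"

definition S_off :: "nat \<Rightarrow> real \<Rightarrow> real \<Rightarrow> real \<Rightarrow> 'a::finite nfa \<Rightarrow> 'a nfa \<Rightarrow> real" where
  "S_off n \<rho>1 \<rho>2 \<rho>3 x y =
     (if \<exists>q\<in>{1..n}. y = Ch_init x q then \<rho>1 / real n
      else if \<exists>q\<in>{1..n}. y = Ch_final x q then \<rho>2 / real n
      else if \<exists>p\<in>{1..n}. \<exists>a. \<exists>q\<in>{1..n}. y = Ch_trans x (p, a, q)
        then \<rho>3 / (real (card (UNIV :: 'a set)) * real n ^ 2)
      else 0)"

definition S_matrix :: "'a::finite nfa set \<Rightarrow> nat \<Rightarrow> real \<Rightarrow> real \<Rightarrow> real \<Rightarrow> 'a nfa \<Rightarrow> 'a nfa \<Rightarrow> real" where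
  "S_matrix X n \<rho>1 \<rho>2 \<rho>3 x y =
     (if x \<noteq> y then S_off n \<rho>1 \<rho>2 \<rho>3 x y
      else 1 - (\<Sum>z\<in>X - {x}. S_off n \<rho>1 \<rho>2 \<rho>3 x z))"

definition S_bullet :: "'a::finite nfa set \<Rightarrow> nat \<Rightarrow> real \<Rightarrow> 'a nfa \<Rightarrow> 'a nfa \<Rightarrow> real" where
  "S_bullet X n \<rho> = S_matrix (bullet X) n 0 \<rho> (1 - \<rho>)"

definition irreducible_chain :: "'b set \<Rightarrow> ('b \<Rightarrow> 'b \<Rightarrow> real) \<Rightarrow> bool" where
  "irreducible_chain X P \<longleftrightarrow>
     (\<forall>x\<in>X. \<forall>y\<in>X. (x, y) \<in> {(u, v). u \<in> X \<and> v \<in> X \<and> P u v \<noteq> 0}\<^sup>*)"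

end

theory Submission
  imports Defs
begin


lemma toggle_neq: "toggle x S \<noteq> S"
  by (auto simp: toggle_def)

lemma toggle_toggle[simp]: "toggle x (toggle x S) = S"
  by (auto simp: toggle_def)

lemma Ch_simps[simp]:
  "trans (Ch_init A q) = trans A" "final (Ch_init A q) = final A" "init (Ch_init A q) = toggle q (init A)"
  "trans (Ch_final A q) = trans A" "init (Ch_final A q) = init A" "final (Ch_final A q) = toggle q (final A)"
  "init (Ch_trans A t) = init A" "final (Ch_trans A t) = final A" "trans (Ch_trans A t) = toggle t (trans A)"
  by (simp_all add: Ch_init_def Ch_final_def Ch_trans_def)

lemma Ch_inv[simp]: "Ch_init (Ch_init A q) q = A" "Ch_final (Ch_final A q) q = A"
  "Ch_trans (Ch_trans A t) t = A"
  by (simp_all add: Ch_init_def Ch_final_def Ch_trans_def)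

lemma Ch_neq: "Ch_final A q \<noteq> Ch_init A q'" "Ch_trans A t \<noteq> Ch_init A q'" "Ch_trans A t \<noteq> Ch_final A q'"
  "Ch_init A q \<noteq> A" "Ch_final A q \<noteq> A" "Ch_trans A t \<noteq> A"
  by (metis Ch_simps toggle_neq)+

definition M :: "bool \<Rightarrow> nat \<Rightarrow> 'a nfa set \<Rightarrow> ('a nfa \<times> 'a nfa) set" where
  "M ini n X = {(A,B). A \<in> X \<and> B \<in> X \<and> ((ini \<and> (\<exists>q\<in>{1..n}. B = Ch_init A q)) \<or> (\<exists>q\<in>{1..n}. B = Ch_final A q)
      \<or> (\<exists>p\<in>{1..n}. \<exists>a. \<exists>q\<in>{1..n}. B = Ch_trans A (p,a,q)))}"

lemma M_sym: "(A,B) \<in> M ini n X \<Longrightarrow> (B,A) \<in> M ini n X"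
proof -
  assume "(A,B) \<in> M ini n X"
  then have AB: "A \<in> X" "B \<in> X" and
    h: "(ini \<and> (\<exists>q\<in>{1..n}. B = Ch_init A q)) \<or> (\<exists>q\<in>{1..n}. B = Ch_final A q)
      \<or> (\<exists>p\<in>{1..n}. \<exists>a. \<exists>q\<in>{1..n}. B = Ch_trans A (p,a,q))" unfolding M_def by auto
  have "(ini \<and> (\<exists>q\<in>{1..n}. A = Ch_init B q)) \<or> (\<exists>q\<in>{1..n}. A = Ch_final B q)
      \<or> (\<exists>p\<in>{1..n}. \<exists>a. \<exists>q\<in>{1..n}. A = Ch_trans B (p,a,q))"
    using h
  proof (elim disjE conjE bexE exE)
    fix q assume a: "ini" "q \<in> {1..n}" "B = Ch_init A q"
    then have "A = Ch_init B q" by simp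
    then show ?thesis using a by blast
  next
    fix q assume a: "q \<in> {1..n}" "B = Ch_final A q"
    then have "A = Ch_final B q" by simp
    then show ?thesis using a by blast
  next
    fix p a q assume a: "p \<in> {1..n}" "q \<in> {1..n}" "B = Ch_trans A (p,a,q)"
    then have "A = Ch_trans B (p,a,q)" by simp
    then show ?thesis using a by blast
  qed
  then show ?thesis using AB unfolding M_def by auto
qed

lemma M_S:
  fixes X :: "'a::finite nfa set"
  assumes "(A,B) \<in> M ini n X" "ini \<longrightarrow> r1 > 0" "r2 > 0" "r3 > 0" "n \<ge> 1"
  shows "S_matrix X n r1 r2 r3 A B \<noteq> 0"
proof -
  have c: "real (card (UNIV::'a set)) > 0" by (simp add: finite_UNIV_card_ge_0)
  from assms(1) have AB: "A \<noteq> B" unfolding M_def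
    apply clarsimp
    apply (elim disjE conjE bexE exE)
    using Ch_neq(4-6) by metis+
  show ?thesis using assms(1) unfolding S_matrix_def M_def
    using AB assms(2-5) c
    by (auto simp: S_off_def Ch_neq Ch_neq[symmetric])
qed

lemma irr_from_M:
  assumes "\<forall>x\<in>X. (x, C) \<in> (M ini n X)\<^sup>*"
    and "\<And>A B. (A,B) \<in> M ini n X \<Longrightarrow> P A B \<noteq> 0"
  shows "irreducible_chain X P"
  unfolding irreducible_chain_def
proof (intro ballI)
  fix x y assume x: "x \<in> X" and y: "y \<in> X"
  have sub: "M ini n X \<subseteq> {(u, v). u \<in> X \<and> v \<in> X \<and> P u v \<noteq> 0}"
  proof
    fix z assume "z \<in> M ini n X"
    then show "z \<in> {(u, v). u \<in> X \<and> v \<in> X \<and> P u v \<noteq> 0}"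
      using assms(2)[of "fst z" "snd z"] unfolding M_def by auto
  qed
  have "(M ini n X)\<inverse> = M ini n X" using M_sym by auto
  have "(C, y) \<in> ((M ini n X)\<inverse>)\<^sup>*" using assms(1) y by (simp add: rtrancl_converseI)
  then have "(C, y) \<in> (M ini n X)\<^sup>*" using \<open>(M ini n X)\<inverse> = M ini n X\<close> by simp
  with assms(1) x have "(x, y) \<in> (M ini n X)\<^sup>*" by (meson rtrancl_trans)
  then show "(x, y) \<in> {(u, v). u \<in> X \<and> v \<in> X \<and> P u v \<noteq> 0}\<^sup>*"
    using rtrancl_mono[OF sub] by auto
qed




definition Cls :: "nat \<Rightarrow> ((nat \<times> 'a \<times> nat) set \<Rightarrow> bool) \<Rightarrow> 'a nfa set" where
  "Cls n D = {A. wf_nfa n A \<and> trim n A \<and> D (trans A)}"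

definition pre :: "'a \<Rightarrow> nat \<Rightarrow> (nat \<times> 'a \<times> nat) set" where
  "pre a0 k = {(i, a0, Suc i) | i. 1 \<le> i \<and> i < k}"

definition acc1 :: "nat \<Rightarrow> 'a nfa \<Rightarrow> bool" where
  "acc1 n A \<longleftrightarrow> (\<forall>q\<in>{1..n}. (1, q) \<in> (edge_rel A)\<^sup>*)"

lemma nfa_eqI: "trans A = X \<Longrightarrow> init A = Y \<Longrightarrow> final A = Z \<Longrightarrow> A = \<lparr>trans = X, init = Y, final = Z\<rparr>"
  for A :: "'a nfa" by (cases A) simp

lemma wf_finite: "wf_nfa n (A::'a::finite nfa) \<Longrightarrow> finite (trans A)"
  unfolding wf_nfa_def
  by (rule finite_subset[of _ "{1..n} \<times> (UNIV::'a set) \<times> {1..n}"]) auto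

lemma edge_rel_mono: "trans A \<subseteq> trans B \<Longrightarrow> edge_rel A \<subseteq> edge_rel B"
  unfolding edge_rel_def by auto

lemma trim_mono:
  assumes "trans A \<subseteq> trans B" "init A \<subseteq> init B" "final A \<subseteq> final B" "trim n A"
  shows "trim n B"
proof -
  have r: "(edge_rel A)\<^sup>* \<subseteq> (edge_rel B)\<^sup>*" using edge_rel_mono[OF assms(1)] rtrancl_mono by blast
  show ?thesis using assms(2-4) r unfolding trim_def accessible_def coaccessible_def by blast
qed

lemma reach_replace:
  assumes "(x,r) \<in> E\<^sup>*" "E \<subseteq> E2 \<union> {(p,q)}" "(x,q) \<in> E2\<^sup>*"
  shows "(x,r) \<in> E2\<^sup>*"
  using assms(1)
proof (induction rule: rtrancl_induct)
  case base then show ?case by simp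
next
  case (step y z)
  show ?case
  proof (cases "(y,z) \<in> E2")
    case True then show ?thesis using step.IH by (rule rtrancl_into_rtrancl[rotated])
  next
    case False then have "z = q" using step.hyps(2) assms(2) by auto
    then show ?thesis using assms(3) by simp
  qed
qed

lemma shortest:
  assumes "(x,y) \<in> E\<^sup>*" "x \<noteq> y"
  shows "\<exists>z. (x,z) \<in> {(u,w). (u,w) \<in> E \<and> w \<noteq> y}\<^sup>* \<and> (z,y) \<in> E"
proof -
  let ?F = "{(u,w). (u,w) \<in> E \<and> w \<noteq> y}"
  have "\<And>y'. (x,y') \<in> E\<^sup>* \<Longrightarrow> (x,y') \<in> ?F\<^sup>* \<or> (\<exists>z. (x,z) \<in> ?F\<^sup>* \<and> (z,y) \<in> E)"
  proof -
    fix y' assume "(x,y') \<in> E\<^sup>*"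
    then show "(x,y') \<in> ?F\<^sup>* \<or> (\<exists>z. (x,z) \<in> ?F\<^sup>* \<and> (z,y) \<in> E)"
    proof (induction rule: rtrancl_induct)
      case base then show ?case by simp
    next
      case (step w y')
      show ?case
      proof (cases "(x,w) \<in> ?F\<^sup>*")
        case True
        show ?thesis
        proof (cases "y' = y")
          case True then show ?thesis using \<open>(x,w) \<in> ?F\<^sup>*\<close> step.hyps(2) by blast
        next
          case False
          then have "(w,y') \<in> ?F" using step.hyps(2) by auto
          then show ?thesis using \<open>(x,w) \<in> ?F\<^sup>*\<close> by (meson rtrancl_into_rtrancl)
        qed
      next
        case False then show ?thesis using step.IH by blast
      qed
    qed
  qed
  from this[OF assms(1)] show ?thesis
  proof
    assume "(x,y) \<in> ?F\<^sup>*"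
    then show ?thesis using assms(2) by (cases rule: rtranclE) auto
  qed
qed

lemma pre_reach: "pre a0 k \<subseteq> trans A \<Longrightarrow> 1 \<le> i \<Longrightarrow> i \<le> k \<Longrightarrow> (1,i) \<in> (edge_rel A)\<^sup>*"
proof (induction i)
  case 0 then show ?case by simp
next
  case (Suc j)
  show ?case
  proof (cases "j = 0")
    case True then show ?thesis by simp
  next
    case False
    then have "(1,j) \<in> (edge_rel A)\<^sup>*" using Suc by simp
    moreover have "(j, a0, Suc j) \<in> pre a0 k" using Suc.prems False unfolding pre_def by auto
    then have "(j, Suc j) \<in> edge_rel A" using Suc.prems unfolding edge_rel_def by auto
    ultimately show ?thesis by (rule rtrancl_into_rtrancl)
  qed
qed

lemma edge_rel_Ch_trans_sub: "edge_rel A \<subseteq> edge_rel (Ch_trans A (p,c,q)) \<union> {(p,q)}"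
  unfolding edge_rel_def by (auto simp: toggle_def)

lemma remove_acc:
  assumes "acc1 n A" "(1,q) \<in> (edge_rel (Ch_trans A (p,c,q)))\<^sup>*"
  shows "acc1 n (Ch_trans A (p,c,q))"
  unfolding acc1_def
proof
  fix r assume "r \<in> {1..n}"
  then have "(1,r) \<in> (edge_rel A)\<^sup>*" using assms(1) unfolding acc1_def by blast
  then show "(1,r) \<in> (edge_rel (Ch_trans A (p,c,q)))\<^sup>*"
    by (rule reach_replace[OF _ edge_rel_Ch_trans_sub assms(2)])
qed

lemma edge_rel_Ch_trans_rem: "t \<in> trans A \<Longrightarrow> trans (Ch_trans A t) = trans A - {t}"
  by (simp add: toggle_def)
lemma edge_rel_Ch_trans_add: "t \<notin> trans A \<Longrightarrow> trans (Ch_trans A t) = insert t (trans A)"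
  by (simp add: toggle_def)

lemma leaf:
  fixes A :: "'a::finite nfa"
  assumes wf: "wf_nfa n A" and k: "1 \<le> k" "k \<le> n"
    and pre: "pre a0 k \<subseteq> trans A" and acc: "acc1 n A"
    and nec: "\<forall>t \<in> trans A - pre a0 k. \<not> acc1 n (Ch_trans A t)"
    and t1: "(k,c1,q1) \<in> trans A" and t2: "(k,c2,q2) \<in> trans A" and q12: "q1 \<noteq> q2"
  shows "\<exists>l\<in>{1..n}. (1,l) \<in> (edge_rel (Ch_trans A (k,c1,q1)))\<^sup>* \<and> (\<forall>c q. (l,c,q) \<notin> trans A)"
proof (rule ccontr)
  assume H: "\<not> ?thesis"
  let ?A' = "Ch_trans A (k,c1,q1)"
  let ?E' = "edge_rel ?A'"
  define V where "V = {r. (1,r) \<in> ?E'\<^sup>*}"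
  have trA': "trans ?A' = trans A - {(k,c1,q1)}" using t1 by (simp add: toggle_def)
  have n1: "1 \<le> n" using k by simp
  have wfr: "\<And>p c q. (p,c,q) \<in> trans A \<Longrightarrow> p \<in> {1..n} \<and> q \<in> {1..n}"
    using wf unfolding wf_nfa_def by auto
  have Vsub: "V \<subseteq> {1..n}"
  proof
    fix r assume "r \<in> V"
    then have "(1,r) \<in> ?E'\<^sup>*" unfolding V_def by simp
    then show "r \<in> {1..n}"
    proof (cases rule: rtranclE)
      case base then show ?thesis using n1 by simp
    next
      case (step w) then show ?thesis using wfr trA' unfolding edge_rel_def by auto
    qed
  qed
  have finV: "finite V" using Vsub finite_subset by blast
  have oneV: "1 \<in> V" unfolding V_def by simp
  have key: "\<And>l c r. (l,c,r) \<in> trans A \<Longrightarrow> (l,c,r) \<notin> pre a0 k \<Longrightarrow>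
      (1,r) \<in> (edge_rel (Ch_trans A (l,c,r)))\<^sup>* \<Longrightarrow> False"
    using nec remove_acc[OF acc] by blast
  have succ: "\<forall>l\<in>V. \<exists>c r. (l,c,r) \<in> trans ?A'"
  proof
    fix l assume lV: "l \<in> V"
    show "\<exists>c r. (l,c,r) \<in> trans ?A'"
    proof (cases "l = k")
      case True then show ?thesis using t2 q12 trA' by auto
    next
      case False
      from H lV Vsub obtain c q where "(l,c,q) \<in> trans A" unfolding V_def by blast
      then show ?thesis using False trA' by auto
    qed
  qed
  then obtain s where s: "\<forall>l\<in>V. \<exists>c. (l,c,s l) \<in> trans ?A'" by metis
  have sA: "\<forall>l\<in>V. \<exists>c. (l,c,s l) \<in> trans A" using s trA' by auto
  have sV: "s ` V \<subseteq> V - {1}"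
  proof
    fix r assume "r \<in> s ` V"
    then obtain l c where lV: "l \<in> V" and r: "r = s l" and tr: "(l,c,r) \<in> trans ?A'" using s by blast
    have "(l,r) \<in> ?E'" using tr unfolding edge_rel_def by auto
    then have "r \<in> V" using lV unfolding V_def by (meson mem_Collect_eq rtrancl_into_rtrancl)
    moreover have "r \<noteq> 1"
    proof
      assume r1: "r = 1"
      have "(l,c,r) \<in> trans A" using tr trA' by auto
      moreover have "(l,c,r) \<notin> pre a0 k" using r1 unfolding pre_def by auto
      ultimately show False using key r1 by auto
    qed
    ultimately show "r \<in> V - {1}" by simp
  qed
  have inj: "inj_on s V"
  proof (rule inj_onI, rule ccontr)
    fix l l' assume lV: "l \<in> V" and l'V: "l' \<in> V" and eq: "s l = s l'" and ne: "l \<noteq> l'"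
    define r where "r = s l"
    obtain c where u: "(l,c,r) \<in> trans A" using sA lV r_def by blast
    obtain c' where u': "(l',c',r) \<in> trans A" using sA l'V r_def eq by metis
    have rrange: "r \<in> {1..n}" using wfr u by blast
    have r1: "r \<noteq> 1" using sV lV r_def by blast
    show False
    proof (cases "r \<le> k")
      case True
      have "(l,c,r) \<notin> pre a0 k \<or> (l',c',r) \<notin> pre a0 k" using ne unfolding pre_def by auto
      then obtain x y where v: "(x,y,r) \<in> trans A" "(x,y,r) \<notin> pre a0 k" using u u' by blast
      have "pre a0 k \<subseteq> trans (Ch_trans A (x,y,r))" using v pre by (auto simp: toggle_def)
      then have "(1,r) \<in> (edge_rel (Ch_trans A (x,y,r)))\<^sup>*" using pre_reach[of a0 k "Ch_trans A (x,y,r)" r] rrange True by auto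
      then show False using key v by blast
    next
      case False
      have np: "\<And>x y. (x,y,r) \<notin> pre a0 k" using False unfolding pre_def by auto
      have "(1,r) \<in> (edge_rel A)\<^sup>*" using acc rrange unfolding acc1_def by auto
      from shortest[OF this r1[symmetric]] obtain z where
        z1: "(1,z) \<in> {(u,w). (u,w) \<in> edge_rel A \<and> w \<noteq> r}\<^sup>*" and z2: "(z,r) \<in> edge_rel A" by blast
      obtain x y where v: "(x,y,r) \<in> trans A" "x \<noteq> z" using u u' ne by metis
      let ?B = "Ch_trans A (x,y,r)"
      have trB: "trans ?B = trans A - {(x,y,r)}" using v by (simp add: toggle_def)
      have "{(u,w). (u,w) \<in> edge_rel A \<and> w \<noteq> r} \<subseteq> edge_rel ?B"
        using trB unfolding edge_rel_def by auto
      then have "(1,z) \<in> (edge_rel ?B)\<^sup>*" using z1 rtrancl_mono by blast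
      moreover have "(z,r) \<in> edge_rel ?B" using z2 trB v(2) unfolding edge_rel_def by auto
      ultimately have "(1,r) \<in> (edge_rel ?B)\<^sup>*" by (rule rtrancl_into_rtrancl)
      then show False using key v np by blast
    qed
  qed
  have "card V \<le> card (V - {1})" using card_inj_on_le[OF inj sV] finV by simp
  moreover have "card (V - {1}) < card V" by (rule card_Diff1_less[OF finV oneV])
  ultimately show False by simp
qed




lemma final_phase:
  assumes "A \<in> Y" "\<And>A q. A \<in> Y \<Longrightarrow> q \<in> {1..n} \<Longrightarrow> q \<notin> final A \<Longrightarrow> Ch_final A q \<in> Y"
  shows "\<exists>B. (A,B) \<in> (M ini n Y)\<^sup>* \<and> B \<in> Y \<and> {1..n} \<subseteq> final B \<and> trans B = trans A \<and> init B = init A"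
  using assms(1)
proof (induction "card ({1..n} - final A)" arbitrary: A rule: less_induct)
  case less
  show ?case
  proof (cases "{1..n} \<subseteq> final A")
    case True then show ?thesis using less.prems by blast
  next
    case False
    then obtain q where q: "q \<in> {1..n}" "q \<notin> final A" by blast
    let ?A' = "Ch_final A q"
    have A'Y: "?A' \<in> Y" using assms(2) less.prems q by blast
    have fA': "final ?A' = insert q (final A)" using q by (simp add: toggle_def)
    have eq: "{1..n} - final ?A' = ({1..n} - final A) - {q}" using fA' by auto
    have qin: "q \<in> {1..n} - final A" using q by simp
    have "card (({1..n} - final A) - {q}) < card ({1..n} - final A)"
      by (rule card_Diff1_less[OF _ qin]) simp
    then have "card ({1..n} - final ?A') < card ({1..n} - final A)" by (simp only: eq)
    then obtain B where B: "(?A',B) \<in> (M ini n Y)\<^sup>*" "B \<in> Y" "{1..n} \<subseteq> final B"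
      "trans B = trans ?A'" "init B = init ?A'" using less.hyps A'Y by blast
    have "(A, ?A') \<in> M ini n Y" using less.prems A'Y q unfolding M_def by blast
    then show ?thesis using B by (auto intro: converse_rtrancl_into_rtrancl)
  qed
qed

lemma init_phase:
  assumes "A \<in> Y" "\<And>A q. A \<in> Y \<Longrightarrow> q \<in> {1..n} \<Longrightarrow> q \<notin> init A \<Longrightarrow> Ch_init A q \<in> Y"
  shows "\<exists>B. (A,B) \<in> (M True n Y)\<^sup>* \<and> B \<in> Y \<and> {1..n} \<subseteq> init B \<and> trans B = trans A \<and> final B = final A"
  using assms(1)
proof (induction "card ({1..n} - init A)" arbitrary: A rule: less_induct)
  case less
  show ?case
  proof (cases "{1..n} \<subseteq> init A")
    case True then show ?thesis using less.prems by blast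
  next
    case False
    then obtain q where q: "q \<in> {1..n}" "q \<notin> init A" by blast
    let ?A' = "Ch_init A q"
    have A'Y: "?A' \<in> Y" using assms(2) less.prems q by blast
    have fA': "init ?A' = insert q (init A)" using q by (simp add: toggle_def)
    have eq: "{1..n} - init ?A' = ({1..n} - init A) - {q}" using fA' by auto
    have qin: "q \<in> {1..n} - init A" using q by simp
    have "card (({1..n} - init A) - {q}) < card ({1..n} - init A)"
      by (rule card_Diff1_less[OF _ qin]) simp
    then have "card ({1..n} - init ?A') < card ({1..n} - init A)" by (simp only: eq)
    then obtain B where B: "(?A',B) \<in> (M True n Y)\<^sup>*" "B \<in> Y" "{1..n} \<subseteq> init B"
      "trans B = trans ?A'" "final B = final ?A'" using less.hyps A'Y by blast
    have "(A, ?A') \<in> M True n Y" using less.prems A'Y q unfolding M_def by blast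
    then show ?thesis using B by (auto intro: converse_rtrancl_into_rtrancl)
  qed
qed

lemma Cls_add_final: "A \<in> Cls n D \<Longrightarrow> q \<in> {1..n} \<Longrightarrow> q \<notin> final A \<Longrightarrow> Ch_final A q \<in> Cls n D"
proof -
  assume a: "A \<in> Cls n D" "q \<in> {1..n}" "q \<notin> final A"
  have f: "final (Ch_final A q) = insert q (final A)" using a by (simp add: toggle_def)
  have "trim n (Ch_final A q)" by (rule trim_mono[of A]) (use a f in \<open>auto simp: Cls_def\<close>)
  then show ?thesis using a f by (auto simp: Cls_def wf_nfa_def)
qed

lemma bullet_add_final: "A \<in> bullet (Cls n D) \<Longrightarrow> q \<in> {1..n} \<Longrightarrow> q \<notin> final A \<Longrightarrow> Ch_final A q \<in> bullet (Cls n D)"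
  using Cls_add_final by (auto simp: bullet_def)

lemma Cls_add_init: "A \<in> Cls n D \<Longrightarrow> q \<in> {1..n} \<Longrightarrow> q \<notin> init A \<Longrightarrow> Ch_init A q \<in> Cls n D"
proof -
  assume a: "A \<in> Cls n D" "q \<in> {1..n}" "q \<notin> init A"
  have f: "init (Ch_init A q) = insert q (init A)" using a by (simp add: toggle_def)
  have "trim n (Ch_init A q)" by (rule trim_mono[of A]) (use a f in \<open>auto simp: Cls_def\<close>)
  then show ?thesis using a f by (auto simp: Cls_def wf_nfa_def)
qed

lemma wf_Ch_trans: "wf_nfa n A \<Longrightarrow> p \<in> {1..n} \<Longrightarrow> q \<in> {1..n} \<Longrightarrow> wf_nfa n (Ch_trans A (p,c,q))"
  by (auto simp: wf_nfa_def toggle_def)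

definition out :: "nat \<Rightarrow> 'a nfa \<Rightarrow> ('a \<times> nat) set" where
  "out k A = {(c,q). (k,c,q) \<in> trans A}"

lemma out_finite: "finite (trans A) \<Longrightarrow> finite (out k A)"
proof -
  assume "finite (trans A)"
  moreover have "out k A \<subseteq> (\<lambda>(p,c,q). (c,q)) ` trans A" unfolding out_def by force
  ultimately show ?thesis using finite_surj by blast
qed

locale degc =
  fixes n :: nat and D :: "(nat \<times> 'a::finite \<times> nat) set \<Rightarrow> bool" and a0 :: 'a
  assumes n1: "1 \<le> n"
    and D1: "\<And>T T'. finite T \<Longrightarrow> D T \<Longrightarrow> T' \<subseteq> T \<Longrightarrow> D T'"
    and D2: "\<And>T k. finite T \<Longrightarrow> D T \<Longrightarrow> k \<in> {1..n} \<Longrightarrow> (k,a0,Suc k) \<notin> T \<Longrightarrow>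
       \<not> D (insert (k,a0,Suc k) T) \<Longrightarrow> \<exists>c1 q1 c2 q2. (k,c1,q1) \<in> T \<and> (k,c2,q2) \<in> T \<and> (c1,q1) \<noteq> (c2,q2)"
    and D3: "\<And>T l q. finite T \<Longrightarrow> D T \<Longrightarrow> (\<forall>c q. (l,c,q) \<notin> T) \<Longrightarrow> D (insert (l,a0,q) T)"
begin

definition C0 :: "'a nfa" where "C0 = \<lparr>trans = {}, init = {1..n}, final = {1..n}\<rparr>"
definition Tgt :: "'a nfa" where "Tgt = \<lparr>trans = pre a0 n, init = {1}, final = {1..n}\<rparr>"

lemma trans_phase:
  "A \<in> Cls n D \<Longrightarrow> init A = {1..n} \<Longrightarrow> final A = {1..n} \<Longrightarrow> (A, C0) \<in> (M True n (Cls n D))\<^sup>*"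
proof (induction "card (trans A)" arbitrary: A rule: less_induct)
  case less
  have wfA: "wf_nfa n A" and DA: "D (trans A)" using less.prems by (auto simp: Cls_def)
  have finA: "finite (trans A)" by (rule wf_finite[OF wfA])
  show ?case
  proof (cases "trans A = {}")
    case True
    then have "A = C0" unfolding C0_def using less.prems by (intro nfa_eqI) auto
    then show ?thesis by simp
  next
    case False
    then obtain p c q where t: "(p,c,q) \<in> trans A" by auto
    have pq: "p \<in> {1..n}" "q \<in> {1..n}" using wfA t unfolding wf_nfa_def by auto
    let ?A' = "Ch_trans A (p,c,q)"
    have trA': "trans ?A' = trans A - {(p,c,q)}" using t by (simp add: toggle_def)
    have "trim n ?A'" using less.prems unfolding trim_def accessible_def coaccessible_def by auto
    moreover have "D (trans ?A')" using D1[OF finA DA] trA' by auto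
    ultimately have A'X: "?A' \<in> Cls n D" using wf_Ch_trans[OF wfA pq] by (simp add: Cls_def)
    have "card (trans ?A') < card (trans A)" by (subst trA') (rule card_Diff1_less[OF finA t])
    then have "(?A', C0) \<in> (M True n (Cls n D))\<^sup>*" using less.hyps A'X less.prems by simp
    moreover have "(A, ?A') \<in> M True n (Cls n D)" using less.prems A'X pq unfolding M_def by blast
    ultimately show ?thesis by (meson converse_rtrancl_into_rtrancl)
  qed
qed

lemma Cls_all: "\<forall>x\<in>Cls n D. (x, C0) \<in> (M True n (Cls n D))\<^sup>*"
proof
  fix x assume x: "x \<in> Cls n D"
  obtain B1 where B1: "(x,B1) \<in> (M True n (Cls n D))\<^sup>*" "B1 \<in> Cls n D" "{1..n} \<subseteq> final B1"
    using final_phase[OF x Cls_add_final] by blast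
  obtain B2 where B2: "(B1,B2) \<in> (M True n (Cls n D))\<^sup>*" "B2 \<in> Cls n D" "{1..n} \<subseteq> init B2"
    "final B2 = final B1"
    using init_phase[OF B1(2) Cls_add_init] by blast
  have "init B2 = {1..n}" "final B2 = {1..n}" using B2 B1 by (auto simp: Cls_def wf_nfa_def)
  then have "(B2, C0) \<in> (M True n (Cls n D))\<^sup>*" using trans_phase B2(2) by blast
  then show "(x, C0) \<in> (M True n (Cls n D))\<^sup>*" using B1(1) B2(1) by (meson rtrancl_trans)
qed

lemma memB: "wf_nfa n A \<Longrightarrow> init A = {1} \<Longrightarrow> final A = {1..n} \<Longrightarrow> acc1 n A \<Longrightarrow> D (trans A) \<Longrightarrow> A \<in> bullet (Cls n D)"
proof -
  assume a: "wf_nfa n A" "init A = {1}" "final A = {1..n}" "acc1 n A" "D (trans A)"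
  have "accessible n A" using a(2,4) unfolding accessible_def acc1_def by simp
  moreover have "coaccessible n A" using a(3) unfolding coaccessible_def by blast
  ultimately show ?thesis using a unfolding bullet_def Cls_def trim_def by simp
qed

lemma XB_acc: "A \<in> bullet (Cls n D) \<Longrightarrow> acc1 n A"
proof -
  assume "A \<in> bullet (Cls n D)"
  then have "init A = {1}" "accessible n A" unfolding bullet_def Cls_def trim_def by auto
  then show ?thesis unfolding accessible_def acc1_def by simp
qed

lemma mv: "A \<in> bullet (Cls n D) \<Longrightarrow> Ch_trans A (p,c,q) \<in> bullet (Cls n D) \<Longrightarrow> p \<in> {1..n} \<Longrightarrow> q \<in> {1..n}
   \<Longrightarrow> (A, Ch_trans A (p,c,q)) \<in> M False n (bullet (Cls n D))"
proof -
  assume a: "A \<in> bullet (Cls n D)" "Ch_trans A (p,c,q) \<in> bullet (Cls n D)" "p \<in> {1..n}" "q \<in> {1..n}"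
  have e: "\<exists>p'\<in>{1..n}. \<exists>a. \<exists>q'\<in>{1..n}. Ch_trans A (p,c,q) = Ch_trans A (p',a,q')"
    by (rule bexI[OF _ a(3)], rule exI[of _ c], rule bexI[OF _ a(4)], rule refl)
  show ?thesis unfolding M_def
    by (rule CollectI, subst case_prod_conv, rule conjI[OF a(1) conjI[OF a(2) disjI2[OF disjI2[OF e]]]])
qed

end




context degc
begin

lemma inner:
  assumes outer: "k < n \<Longrightarrow> (\<And>A. A \<in> bullet (Cls n D) \<Longrightarrow> final A = {1..n} \<Longrightarrow> pre a0 (Suc k) \<subseteq> trans A
        \<Longrightarrow> (A,Tgt) \<in> (M False n (bullet (Cls n D)))\<^sup>*)"
    and k: "1 \<le> k" "k \<le> n"
  shows "A \<in> bullet (Cls n D) \<Longrightarrow> final A = {1..n} \<Longrightarrow> pre a0 k \<subseteq> trans A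
        \<Longrightarrow> (A,Tgt) \<in> (M False n (bullet (Cls n D)))\<^sup>*"
proof (induction "card (trans A) + card (out k A)" arbitrary: A rule: less_induct)
  case less
  have AXB: "A \<in> bullet (Cls n D)" and fA: "final A = {1..n}" and preA: "pre a0 k \<subseteq> trans A"
    using less.prems by auto
  have wfA: "wf_nfa n A" and iA: "init A = {1}" and DA: "D (trans A)" using AXB by (auto simp: bullet_def Cls_def)
  have accA: "acc1 n A" using XB_acc AXB .
  have finA: "finite (trans A)" by (rule wf_finite[OF wfA])
  have wfr: "\<And>p c q. (p,c,q) \<in> trans A \<Longrightarrow> p \<in> {1..n} \<and> q \<in> {1..n}" using wfA unfolding wf_nfa_def by auto
  show ?case
  proof (cases "\<exists>t \<in> trans A - pre a0 k. acc1 n (Ch_trans A t)")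
    case True
    then obtain p c q where t: "(p,c,q) \<in> trans A" "(p,c,q) \<notin> pre a0 k" "acc1 n (Ch_trans A (p,c,q))" by auto
    let ?A' = "Ch_trans A (p,c,q)"
    have trA': "trans ?A' = trans A - {(p,c,q)}" using t by (simp add: toggle_def)
    have pq: "p \<in> {1..n}" "q \<in> {1..n}" using wfr t by auto
    have "D (trans ?A')" using D1[OF finA DA] trA' by auto
    then have A'B: "?A' \<in> bullet (Cls n D)"
      using memB[OF wf_Ch_trans[OF wfA pq]] iA fA t(3) by simp
    have pre': "pre a0 k \<subseteq> trans ?A'" using preA t trA' by auto
    have "card (trans ?A') < card (trans A)" by (subst trA') (rule card_Diff1_less[OF finA t(1)])
    moreover have "card (out k ?A') \<le> card (out k A)"
      by (rule card_mono[OF out_finite[OF finA]]) (unfold out_def trA', auto)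
    ultimately have "(?A', Tgt) \<in> (M False n (bullet (Cls n D)))\<^sup>*"
      using less.hyps A'B fA pre' by simp
    moreover have "(A, ?A') \<in> M False n (bullet (Cls n D))" by (rule mv[OF AXB A'B pq])
    ultimately show ?thesis by (meson converse_rtrancl_into_rtrancl)
  next
    case False
    hence nec: "\<forall>t \<in> trans A - pre a0 k. \<not> acc1 n (Ch_trans A t)" by blast
    show ?thesis
    proof (cases "k = n")
      case True
      have "trans A \<subseteq> pre a0 n"
      proof
        fix t assume tA: "t \<in> trans A"
        show "t \<in> pre a0 n"
        proof (rule ccontr)
          assume tn: "t \<notin> pre a0 n"
          have "pre a0 n \<subseteq> trans (Ch_trans A t)" using preA True tA tn by (auto simp: toggle_def)
          then have "acc1 n (Ch_trans A t)" unfolding acc1_def using pre_reach[of a0 n "Ch_trans A t"] by auto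
          then show False using nec tA tn True by auto
        qed
      qed
      then have "trans A = pre a0 n" using preA True by auto
      then have "A = Tgt" unfolding Tgt_def using iA fA by (rule nfa_eqI)
      then show ?thesis by simp
    next
      case False
      then have kn: "k < n" using k by simp
      have kr: "k \<in> {1..n}" "Suc k \<in> {1..n}" using k kn by auto
      show ?thesis
      proof (cases "(k,a0,Suc k) \<in> trans A")
        case True
        have "pre a0 (Suc k) \<subseteq> trans A" using preA True unfolding pre_def by (auto simp: less_Suc_eq)
        then show ?thesis using outer kn AXB fA by blast
      next
        case notin: False
        let ?A' = "Ch_trans A (k,a0,Suc k)"
        have trA': "trans ?A' = insert (k,a0,Suc k) (trans A)" using notin by (simp add: toggle_def)
        show ?thesis
        proof (cases "D (insert (k,a0,Suc k) (trans A))")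
          case True
          have "edge_rel A \<subseteq> edge_rel ?A'" by (rule edge_rel_mono) (unfold trA', rule subset_insertI)
          then have acc': "acc1 n ?A'" using accA rtrancl_mono unfolding acc1_def by blast
          have A'B: "?A' \<in> bullet (Cls n D)"
            using memB[OF wf_Ch_trans[OF wfA kr]] iA fA acc' True trA' by simp
          have "pre a0 (Suc k) \<subseteq> trans ?A'" using preA trA' unfolding pre_def by (auto simp: less_Suc_eq)
          then have "(?A', Tgt) \<in> (M False n (bullet (Cls n D)))\<^sup>*" using outer kn A'B fA by simp
          moreover have "(A, ?A') \<in> M False n (bullet (Cls n D))" by (rule mv[OF AXB A'B kr])
          ultimately show ?thesis by (meson converse_rtrancl_into_rtrancl)
        next
          case False
          from D2[OF finA DA kr(1) notin False] obtain c1 q1 c2 q2 where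
            t12: "(k,c1,q1) \<in> trans A" "(k,c2,q2) \<in> trans A" "(c1,q1) \<noteq> (c2,q2)" by blast
          have t1np: "(k,c1,q1) \<notin> pre a0 k" unfolding pre_def by auto
          have q12: "q1 \<noteq> q2"
          proof
            assume qq: "q1 = q2"
            then have cc: "c1 \<noteq> c2" using t12 by auto
            let ?B = "Ch_trans A (k,c1,q1)"
            have trB: "trans ?B = trans A - {(k,c1,q1)}" using t12 by (simp add: toggle_def)
            have "edge_rel A \<subseteq> edge_rel ?B"
            proof
              fix e assume "e \<in> edge_rel A"
              then obtain x y z where e: "e = (x,z)" "(x,y,z) \<in> trans A" unfolding edge_rel_def by auto
              show "e \<in> edge_rel ?B"
              proof (cases "(x,y,z) = (k,c1,q1)")
                case True
                then have "(x,c2,z) \<in> trans ?B" using trB t12 qq cc by auto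
                then show ?thesis using e unfolding edge_rel_def by auto
              next
                case False
                then have "(x,y,z) \<in> trans ?B" using trB e by auto
                then show ?thesis using e unfolding edge_rel_def by auto
              qed
            qed
            then have "acc1 n ?B" using accA rtrancl_mono unfolding acc1_def by blast
            then show False using nec t12(1) t1np by blast
          qed
          from leaf[OF wfA k preA accA nec t12(1) t12(2) q12] obtain l where
            l: "l \<in> {1..n}" "(1,l) \<in> (edge_rel (Ch_trans A (k,c1,q1)))\<^sup>*" "\<forall>c q. (l,c,q) \<notin> trans A"
            by blast
          have lk: "l \<noteq> k" using l(3) t12(1) by blast
          have q1r: "q1 \<in> {1..n}" using wfr t12(1) by blast
          let ?A1 = "Ch_trans A (l,a0,q1)"
          have trA1: "trans ?A1 = insert (l,a0,q1) (trans A)" using l(3) by (simp add: toggle_def)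
          have "edge_rel A \<subseteq> edge_rel ?A1" by (rule edge_rel_mono) (unfold trA1, rule subset_insertI)
          then have acc1': "acc1 n ?A1" using accA rtrancl_mono unfolding acc1_def by blast
          have DA1: "D (trans ?A1)" using D3[OF finA DA l(3)] trA1 by simp
          have wfA1: "wf_nfa n ?A1" by (rule wf_Ch_trans[OF wfA l(1) q1r])
          have A1B: "?A1 \<in> bullet (Cls n D)" using memB[OF wfA1] iA fA acc1' DA1 by simp
          let ?A2 = "Ch_trans ?A1 (k,c1,q1)"
          have t1A1: "(k,c1,q1) \<in> trans ?A1" using trA1 t12(1) by simp
          have trA2: "trans ?A2 = trans ?A1 - {(k,c1,q1)}" using t1A1 by (simp add: toggle_def)
          have trA2': "trans ?A2 = insert (l,a0,q1) (trans A - {(k,c1,q1)})" using trA2 trA1 lk by auto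
          have acc2: "acc1 n ?A2"
          proof -
            have "edge_rel (Ch_trans A (k,c1,q1)) \<subseteq> edge_rel ?A2"
              by (rule edge_rel_mono) (use trA2' t12(1) in \<open>auto simp: toggle_def\<close>)
            then have "(1,l) \<in> (edge_rel ?A2)\<^sup>*" using l(2) rtrancl_mono by blast
            moreover have "(l,q1) \<in> edge_rel ?A2" using trA2' unfolding edge_rel_def by auto
            ultimately have "(1,q1) \<in> (edge_rel ?A2)\<^sup>*" by (rule rtrancl_into_rtrancl)
            then show ?thesis by (rule remove_acc[OF acc1'])
          qed
          have DA2: "D (trans ?A2)" using D1[OF wf_finite[OF wfA1] DA1] trA2 by auto
          have A2B: "?A2 \<in> bullet (Cls n D)"
            using memB[OF wf_Ch_trans[OF wfA1 kr(1) q1r]] iA fA acc2 DA2 by simp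
          have pre2: "pre a0 k \<subseteq> trans ?A2" using preA trA2' t1np by auto
          have nin: "(l,a0,q1) \<notin> trans A - {(k,c1,q1)}" using l(3) by auto
          have "card (trans ?A2) = Suc (card (trans A - {(k,c1,q1)}))"
            unfolding trA2' by (rule card_insert_disjoint) (use finA nin in auto)
          also have "\<dots> = card (trans A)"
          proof -
            have "card (trans A - {(k,c1,q1)}) = card (trans A) - 1" by (rule card_Diff_singleton[OF t12(1)])
            moreover have "0 < card (trans A)" using finA t12(1) card_gt_0_iff by blast
            ultimately show ?thesis by simp
          qed
          finally have c1: "card (trans ?A2) = card (trans A)" .
          have oeq: "out k ?A2 = out k A - {(c1,q1)}" using trA2' lk unfolding out_def by auto
          have "card (out k ?A2) < card (out k A)" unfolding oeq
            by (rule card_Diff1_less[OF out_finite[OF finA]]) (use t12(1) in \<open>simp add: out_def\<close>)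
          then have "(?A2, Tgt) \<in> (M False n (bullet (Cls n D)))\<^sup>*"
            using less.hyps A2B fA pre2 c1 by simp
          moreover have "(A, ?A1) \<in> M False n (bullet (Cls n D))" by (rule mv[OF AXB A1B l(1) q1r])
          moreover have "(?A1, ?A2) \<in> M False n (bullet (Cls n D))" by (rule mv[OF A1B A2B kr(1) q1r])
          ultimately show ?thesis by (meson converse_rtrancl_into_rtrancl)
        qed
      qed
    qed
  qed
qed

lemma main_bullet:
  "A \<in> bullet (Cls n D) \<Longrightarrow> final A = {1..n} \<Longrightarrow> 1 \<le> k \<Longrightarrow> k \<le> n \<Longrightarrow> pre a0 k \<subseteq> trans A
     \<Longrightarrow> (A,Tgt) \<in> (M False n (bullet (Cls n D)))\<^sup>*"
proof (induction "n - k" arbitrary: k A rule: less_induct)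
  case less
  have outer: "k < n \<Longrightarrow> (\<And>A. A \<in> bullet (Cls n D) \<Longrightarrow> final A = {1..n} \<Longrightarrow> pre a0 (Suc k) \<subseteq> trans A
        \<Longrightarrow> (A,Tgt) \<in> (M False n (bullet (Cls n D)))\<^sup>*)"
  proof -
    fix A assume "k < n" "A \<in> bullet (Cls n D)" "final A = {1..n}" "pre a0 (Suc k) \<subseteq> trans A"
    then show "(A,Tgt) \<in> (M False n (bullet (Cls n D)))\<^sup>*"
      using less.hyps[of "Suc k" A] by simp
  qed
  show ?case by (rule inner[OF outer]) (use less.prems in auto)
qed

lemma bullet_all: "\<forall>x\<in>bullet (Cls n D). (x, Tgt) \<in> (M False n (bullet (Cls n D)))\<^sup>*"
proof
  fix x assume x: "x \<in> bullet (Cls n D)"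
  obtain B1 where B1: "(x,B1) \<in> (M False n (bullet (Cls n D)))\<^sup>*" "B1 \<in> bullet (Cls n D)" "{1..n} \<subseteq> final B1"
    using final_phase[OF x bullet_add_final] by blast
  have fB: "final B1 = {1..n}" using B1 by (auto simp: bullet_def Cls_def wf_nfa_def)
  have preB: "pre a0 1 \<subseteq> trans B1" unfolding pre_def by auto
  have "(B1, Tgt) \<in> (M False n (bullet (Cls n D)))\<^sup>*"
    by (rule main_bullet[OF B1(2) fB order_refl n1 preB])
  then show "(x, Tgt) \<in> (M False n (bullet (Cls n D)))\<^sup>*" using B1(1) by (meson rtrancl_trans)
qed

lemma result1:
  assumes "\<rho>1 > 0" "\<rho>2 > 0" "\<rho>3 > 0"
  shows "irreducible_chain (Cls n D) (S_matrix (Cls n D) n \<rho>1 \<rho>2 \<rho>3)"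
  by (rule irr_from_M[OF Cls_all]) (rule M_S, use assms n1 in auto)

lemma result2:
  assumes "0 < \<rho>" "\<rho> < 1"
  shows "irreducible_chain (bullet (Cls n D)) (S_bullet (Cls n D) n \<rho>)"
  unfolding S_bullet_def
  by (rule irr_from_M[OF bullet_all]) (rule M_S, use assms n1 in auto)

end




definition Dm :: "nat \<Rightarrow> nat \<Rightarrow> (nat \<times> 'a \<times> nat) set \<Rightarrow> bool" where
  "Dm m n T = (\<forall>p\<in>{1..n}. card {(a, q). (p, a, q) \<in> T} \<le> m)"

definition Dm' :: "nat \<Rightarrow> nat \<Rightarrow> (nat \<times> 'a \<times> nat) set \<Rightarrow> bool" where
  "Dm' m n T = (\<forall>p\<in>{1..n}. \<forall>a. card {q. (p, a, q) \<in> T} \<le> m)"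

lemma two_elems: "2 \<le> card S \<Longrightarrow> \<exists>x\<in>S. \<exists>y\<in>S. x \<noteq> y"
proof -
  assume c: "2 \<le> card S"
  then have fin: "finite S" and ne: "S \<noteq> {}" by (auto intro: card_ge_0_finite)
  then obtain x where x: "x \<in> S" by blast
  have "card (S - {x}) = card S - 1" using x fin by simp
  have "S - {x} \<noteq> {}"
  proof
    assume "S - {x} = {}"
    then have "S = {x}" using x by blast
    then show False using c by simp
  qed
  then obtain y where "y \<in> S" "y \<noteq> x" by blast
  then show ?thesis using x by blast
qed

lemma fin_sec: "finite T \<Longrightarrow> finite {(a,q). (p,a,q) \<in> T}"
proof -
  assume "finite T"
  moreover have "{(a,q). (p,a,q) \<in> T} \<subseteq> (\<lambda>(p,a,q). (a,q)) ` T" by force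
  ultimately show ?thesis using finite_surj by blast
qed

lemma fin_sec': "finite T \<Longrightarrow> finite {q. (p,a,q) \<in> T}"
proof -
  assume "finite T"
  moreover have "{q. (p,a,q) \<in> T} \<subseteq> (\<lambda>(p,a,q). q) ` T" by force
  ultimately show ?thesis using finite_surj by blast
qed

lemma sec_insert: "{(a,q). (p,a,q) \<in> insert (k,b,r) T} =
   (if p = k then insert (b,r) {(a,q). (p,a,q) \<in> T} else {(a,q). (p,a,q) \<in> T})" by auto

lemma sec_insert': "{q. (p,a,q) \<in> insert (k,b,r) T} =
   (if p = k \<and> a = b then insert r {q. (p,a,q) \<in> T} else {q. (p,a,q) \<in> T})" by auto

lemma degc_N: "1 \<le> n \<Longrightarrow> degc n (\<lambda>_. True) (a0::'a::finite)"
  by unfold_locales auto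

lemma degc_m:
  assumes "1 \<le> n" "2 \<le> m"
  shows "degc n (Dm m n) (a0::'a::finite)"
proof
  show "1 \<le> n" by fact
next
  fix T T' :: "(nat \<times> 'a \<times> nat) set"
  assume "finite T" "Dm m n T" "T' \<subseteq> T"
  then show "Dm m n T'" unfolding Dm_def
  proof (intro ballI)
    fix p assume a: "finite T" "\<forall>p\<in>{1..n}. card {(a, q). (p, a, q) \<in> T} \<le> m" "T' \<subseteq> T" "p \<in> {1..n}"
    have "{(a,q). (p,a,q) \<in> T'} \<subseteq> {(a,q). (p,a,q) \<in> T}" using a(3) by auto
    then have "card {(a,q). (p,a,q) \<in> T'} \<le> card {(a,q). (p,a,q) \<in> T}" by (rule card_mono[OF fin_sec[OF a(1)]])
    then show "card {(a,q). (p,a,q) \<in> T'} \<le> m" using a(2,4) by (meson order_trans)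
  qed
next
  fix T :: "(nat \<times> 'a \<times> nat) set" and k
  assume fin: "finite T" and D: "Dm m n T" and k: "k \<in> {1..n}" and ni: "(k, a0, Suc k) \<notin> T"
    and nD: "\<not> Dm m n (insert (k, a0, Suc k) T)"
  from nD obtain p where p: "p \<in> {1..n}" "card {(a, q). (p, a, q) \<in> insert (k, a0, Suc k) T} > m"
    unfolding Dm_def by (auto simp: not_le)
  have pk: "p = k"
  proof (rule ccontr)
    assume pk: "p \<noteq> k"
    then have "{(a, q). (p, a, q) \<in> insert (k, a0, Suc k) T} = {(a, q). (p, a, q) \<in> T}" by auto
    moreover have "card {(a, q). (p, a, q) \<in> T} \<le> m" using D p(1) unfolding Dm_def by blast
    ultimately show False using p(2) by simp
  qed
  have "card (insert (a0, Suc k) {(a, q). (k, a, q) \<in> T}) \<le> Suc (card {(a, q). (k, a, q) \<in> T})"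
    by (simp add: card_insert_if fin_sec[OF fin])
  then have "2 \<le> card {(a, q). (k, a, q) \<in> T}" using p pk assms(2) unfolding sec_insert by simp
  then obtain x y where "x \<in> {(a, q). (k, a, q) \<in> T}" "y \<in> {(a, q). (k, a, q) \<in> T}" "x \<noteq> y"
    using two_elems by blast
  then show "\<exists>c1 q1 c2 q2. (k, c1, q1) \<in> T \<and> (k, c2, q2) \<in> T \<and> (c1, q1) \<noteq> (c2, q2)"
    by (cases x, cases y) auto
next
  fix T :: "(nat \<times> 'a \<times> nat) set" and l q
  assume fin: "finite T" and D: "Dm m n T" and nl: "\<forall>c q. (l, c, q) \<notin> T"
  have e: "{(a, q). (l, a, q) \<in> T} = {}" using nl by auto
  show "Dm m n (insert (l, a0, q) T)" unfolding Dm_def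
  proof
    fix p assume "p \<in> {1..n}"
    then show "card {(a, qa). (p, a, qa) \<in> insert (l, a0, q) T} \<le> m"
      using D assms(2) e unfolding Dm_def sec_insert by auto
  qed
qed

lemma degc_m':
  assumes "1 \<le> n" "2 \<le> m"
  shows "degc n (Dm' m n) (a0::'a::finite)"
proof
  show "1 \<le> n" by fact
next
  fix T T' :: "(nat \<times> 'a \<times> nat) set"
  assume "finite T" "Dm' m n T" "T' \<subseteq> T"
  then show "Dm' m n T'" unfolding Dm'_def
  proof (intro ballI allI)
    fix p a assume h: "finite T" "\<forall>p\<in>{1..n}. \<forall>a. card {q. (p, a, q) \<in> T} \<le> m" "T' \<subseteq> T" "p \<in> {1..n}"
    have "{q. (p,a,q) \<in> T'} \<subseteq> {q. (p,a,q) \<in> T}" using h(3) by auto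
    then have "card {q. (p,a,q) \<in> T'} \<le> card {q. (p,a,q) \<in> T}" by (rule card_mono[OF fin_sec'[OF h(1)]])
    then show "card {q. (p,a,q) \<in> T'} \<le> m" using h(2,4) by (meson order_trans)
  qed
next
  fix T :: "(nat \<times> 'a \<times> nat) set" and k
  assume fin: "finite T" and D: "Dm' m n T" and k: "k \<in> {1..n}" and ni: "(k, a0, Suc k) \<notin> T"
    and nD: "\<not> Dm' m n (insert (k, a0, Suc k) T)"
  from nD obtain p a where p: "p \<in> {1..n}" "card {q. (p, a, q) \<in> insert (k, a0, Suc k) T} > m"
    unfolding Dm'_def by (auto simp: not_le)
  have pk: "p = k \<and> a = a0"
  proof (rule ccontr)
    assume pk: "\<not> (p = k \<and> a = a0)"
    then have "{q. (p, a, q) \<in> insert (k, a0, Suc k) T} = {q. (p, a, q) \<in> T}" by auto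
    moreover have "card {q. (p, a, q) \<in> T} \<le> m" using D p(1) unfolding Dm'_def by blast
    ultimately show False using p(2) by simp
  qed
  have "card (insert (Suc k) {q. (k, a0, q) \<in> T}) \<le> Suc (card {q. (k, a0, q) \<in> T})"
    by (simp add: card_insert_if fin_sec'[OF fin])
  then have "2 \<le> card {q. (k, a0, q) \<in> T}" using p pk assms(2) unfolding sec_insert' by simp
  then obtain x y where "x \<in> {q. (k, a0, q) \<in> T}" "y \<in> {q. (k, a0, q) \<in> T}" "x \<noteq> y"
    using two_elems by blast
  then show "\<exists>c1 q1 c2 q2. (k, c1, q1) \<in> T \<and> (k, c2, q2) \<in> T \<and> (c1, q1) \<noteq> (c2, q2)" by auto
next
  fix T :: "(nat \<times> 'a \<times> nat) set" and l q
  assume fin: "finite T" and D: "Dm' m n T" and nl: "\<forall>c q. (l, c, q) \<notin> T"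
  have e: "\<And>a. {q. (l, a, q) \<in> T} = {}" using nl by auto
  show "Dm' m n (insert (l, a0, q) T)" unfolding Dm'_def
  proof (intro ballI allI)
    fix p a assume "p \<in> {1..n}"
    then show "card {qa. (p, a, qa) \<in> insert (l, a0, q) T} \<le> m"
      using D assms(2) e unfolding Dm'_def sec_insert' by auto
  qed
qed

lemma cls_eqs:
  "NFA_class n = Cls n (\<lambda>_. True)"
  "NFA_class_m m n = Cls n (Dm m n)"
  "NFA_class_m' m n = Cls n (Dm' m n)"
  by (auto simp: NFA_class_def NFA_class_m_def NFA_class_m'_def Cls_def Dm_def Dm'_def)

theorem lemma1:
  fixes m n :: nat and \<rho> \<rho>1 \<rho>2 \<rho>3 :: real
  assumes "card (UNIV :: ('a::finite) set) \<ge> 2"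
    and "n \<ge> 1" and "m \<ge> 2"
    and "0 < \<rho>" and "\<rho> < 1"
    and "\<rho>1 > 0" and "\<rho>2 > 0" and "\<rho>3 > 0" and "\<rho>1 + \<rho>2 + \<rho>3 \<le> 1"
  shows "irreducible_chain (NFA_class n :: 'a nfa set) (S_matrix (NFA_class n) n \<rho>1 \<rho>2 \<rho>3)
       \<and> irreducible_chain (NFA_class_m m n :: 'a nfa set) (S_matrix (NFA_class_m m n) n \<rho>1 \<rho>2 \<rho>3)
       \<and> irreducible_chain (NFA_class_m' m n :: 'a nfa set) (S_matrix (NFA_class_m' m n) n \<rho>1 \<rho>2 \<rho>3)
       \<and> irreducible_chain (bullet (NFA_class n :: 'a nfa set)) (S_bullet (NFA_class n) n \<rho>)
       \<and> irreducible_chain (bullet (NFA_class_m m n :: 'a nfa set)) (S_bullet (NFA_class_m m n) n \<rho>)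
       \<and> irreducible_chain (bullet (NFA_class_m' m n :: 'a nfa set)) (S_bullet (NFA_class_m' m n) n \<rho>)"
proof -
  have d1: "degc n (\<lambda>_. True) (undefined::'a)" using degc_N assms(2) by blast
  have d2: "degc n (Dm m n) (undefined::'a)" using degc_m assms(2,3) by blast
  have d3: "degc n (Dm' m n) (undefined::'a)" using degc_m' assms(2,3) by blast
  show ?thesis unfolding cls_eqs
    by (intro conjI degc.result1[OF d1 assms(6-8)] degc.result1[OF d2 assms(6-8)]
        degc.result1[OF d3 assms(6-8)] degc.result2[OF d1 assms(4,5)] degc.result2[OF d2 assms(4,5)]
        degc.result2[OF d3 assms(4,5)])
qed


end
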